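(* The set $\mathtt{REV}$ of injective (equivalently, reversible) cellular automata on $\Sigma^\mathbb{Z}$ is a closed subset of $\mathtt{CA}$ equipped with the pointwise topology.
   Context: $\Sigma$ is a finite alphabet with $|\Sigma|\ge 2$, and $\Sigma^\mathbb{Z}$ carries the product (Cantor) topology. The shift $\sigma:\Sigma^\mathbb{Z}\to\Sigma^\mathbb{Z}$ is $\sigma(x)_i=x_{i+1}$. A cellular automaton (CA) is a continuous map $c:\Sigma^\mathbb{Z}\to\Sigma^\mathbb{Z}$ with $c\circ\sigma=\sigma\circ c$; $\mathtt{CA}$ is the set of all CA on $\Sigma^\mathbb{Z}$, and $\mathtt{REV}\subseteq\mathtt{CA}$ is the set of injective CA. The pointwise topology on $\mathtt{CA}$ is the topology generated by the subbase consisting of the sets $U_x(a)=\{c\in\mathtt{CA}\mid c(x)_0=a\}$ for $x\in\Sigma^\mathbb{Z}$, $a\in\Sigma$. *)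

theory Defs
  imports "HOL-Analysis.Analysis"
begin

definition cantor_top :: "(int \<Rightarrow> 'a) topology" where
  "cantor_top = product_topology (\<lambda>_. discrete_topology (UNIV :: 'a set)) (UNIV :: int set)"

definition shift :: "(int \<Rightarrow> 'a) \<Rightarrow> (int \<Rightarrow> 'a)" where
  "shift x = (\<lambda>i. x (i + 1))"

definition CA :: "((int \<Rightarrow> 'a) \<Rightarrow> (int \<Rightarrow> 'a)) set" where
  "CA = {c. continuous_map cantor_top cantor_top c \<and> c \<circ> shift = shift \<circ> c}"

definition REV :: "((int \<Rightarrow> 'a) \<Rightarrow> (int \<Rightarrow> 'a)) set" where
  "REV = {c \<in> CA. inj c}"

definition U_pt :: "(int \<Rightarrow> 'a) \<Rightarrow> 'a \<Rightarrow> ((int \<Rightarrow> 'a) \<Rightarrow> (int \<Rightarrow> 'a)) set" where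
  "U_pt x a = {c \<in> CA. c x 0 = a}"

definition pointwise_top :: "((int \<Rightarrow> 'a) \<Rightarrow> (int \<Rightarrow> 'a)) topology" where
  "pointwise_top = topology_generated_by {U_pt x a | x a. True}"

end

theory Submission
  imports Defs
begin

definition shn :: "int \<Rightarrow> (int \<Rightarrow> 'a) \<Rightarrow> (int \<Rightarrow> 'a)" where
  "shn k z = (\<lambda>j. z (j + k))"

lemma shift_comm: "c \<in> CA \<Longrightarrow> c (shift z) = shift (c z)"
  unfolding CA_def by (metis (mono_tags, lifting) comp_apply mem_Collect_eq)

lemma shn_nat: "c \<in> CA \<Longrightarrow> c (shn (int n) z) = shn (int n) (c z)"
proof (induction n arbitrary: z)
  case 0 then show ?case by (simp add: shn_def)
next
  case (Suc n)
  have "shn (int (Suc n)) z = shift (shn (int n) z)" by (auto simp: shn_def shift_def algebra_simps)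
  moreover have "shn (int (Suc n)) (c z) = shift (shn (int n) (c z))" by (auto simp: shn_def shift_def algebra_simps)
  ultimately show ?case using Suc shift_comm by metis
qed

lemma ca_at: assumes "c \<in> CA" shows "c z i = c (shn i z) 0"
proof (cases "i \<ge> 0")
  case True
  then obtain n where "i = int n" by (metis nonneg_eq_int)
  then show ?thesis using shn_nat[OF assms, of n z] by (simp add: shn_def fun_eq_iff)
next
  case False
  then obtain n where n: "i = - int n" by (metis linorder_not_le neg_int_cases order_less_imp_le nonneg_eq_int minus_minus neg_0_le_iff_le)
  define w where "w = shn i z"
  have "z = shn (int n) w" by (auto simp: w_def shn_def n)
  then have "c z = shn (int n) (c w)" using shn_nat[OF assms] by metis
  then show ?thesis by (simp add: shn_def n w_def)
qed


lemma topspace_cantor[simp]: "topspace (cantor_top :: (int \<Rightarrow> 'a) topology) = UNIV"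
  by (simp add: cantor_top_def PiE_UNIV_domain)

lemma compact_cantor: "compact_space (cantor_top :: (int \<Rightarrow> 'a::finite) topology)"
  unfolding cantor_top_def compact_space_product_topology by (simp add: compact_space_discrete_topology)

lemma ca_local0:
  assumes c: "(c :: (int \<Rightarrow> 'a::finite) \<Rightarrow> _) \<in> CA"
  shows "\<exists>r::nat. \<forall>z w. (\<forall>j. \<bar>j\<bar> \<le> int r \<longrightarrow> z j = w j) \<longrightarrow> c z 0 = c w 0"
proof -
  define agree where "agree r z w \<longleftrightarrow> (\<forall>j. \<bar>j\<bar> \<le> int r \<longrightarrow> z j = (w::int \<Rightarrow> 'a) j)" for r z w
  define B where "B r = {z. \<forall>w. agree r z w \<longrightarrow> c w 0 = c z 0}" for r
  have opn: "openin cantor_top (B r)" for r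
    unfolding cantor_top_def openin_product_topology_alt
  proof (intro ballI)
    fix z assume z: "z \<in> B r"
    define U where "U i = (if \<bar>i\<bar> \<le> int r then {z i} else UNIV)" for i
    have "{i \<in> UNIV. U i \<noteq> topspace (discrete_topology UNIV)} \<subseteq> {-int r..int r}"
      by (auto simp: U_def split: if_splits)
    then have "finite {i \<in> UNIV. U i \<noteq> topspace (discrete_topology UNIV)}"
      using finite_subset by blast
    moreover have "z \<in> Pi\<^sub>E UNIV U" by (auto simp: U_def PiE_UNIV_domain)
    moreover have "Pi\<^sub>E UNIV U \<subseteq> B r"
    proof
      fix w assume "w \<in> Pi\<^sub>E UNIV U"
      then have "w i \<in> U i" for i by (simp add: PiE_UNIV_domain Pi_iff)
      then have zw: "agree r z w" unfolding agree_def U_def by (metis singletonD)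
      show "w \<in> B r" unfolding B_def
      proof (intro CollectI allI impI)
        fix w' assume "agree r w w'"
        then have "agree r z w'" using zw by (auto simp: agree_def)
        then show "c w' 0 = c w 0" using z zw by (auto simp: B_def)
      qed
    qed
    ultimately show "\<exists>U. finite {i \<in> UNIV. U i \<noteq> topspace (discrete_topology UNIV)} \<and>
             (\<forall>i\<in>UNIV. openin (discrete_topology UNIV) (U i)) \<and> z \<in> Pi\<^sub>E UNIV U \<and> Pi\<^sub>E UNIV U \<subseteq> B r"
      by (intro exI[of _ U] conjI) (simp_all add: openin_discrete_topology)
  qed
  have cov: "\<exists>r. z \<in> B r" for z
  proof -
    have cm: "continuous_map cantor_top (discrete_topology (UNIV::'a set)) (\<lambda>z. c z 0)"
    proof -
      have "continuous_map cantor_top cantor_top c" using c by (simp add: CA_def)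
      moreover have "continuous_map (cantor_top::(int\<Rightarrow>'a) topology) (discrete_topology UNIV) (\<lambda>x. x 0)"
        unfolding cantor_top_def by (rule continuous_map_product_projection) simp
      ultimately show ?thesis using continuous_map_compose[unfolded o_def] by blast
    qed
    have "openin cantor_top {x \<in> topspace cantor_top. c x 0 \<in> {c z 0}}"
      using cm unfolding continuous_map_def by (meson openin_discrete_topology subset_UNIV)
    then have "openin cantor_top {x. c x 0 = c z 0}" by simp
    then obtain U where U: "finite {i \<in> UNIV. U i \<noteq> topspace (discrete_topology (UNIV::'a set))}"
      "z \<in> Pi\<^sub>E UNIV U" "Pi\<^sub>E UNIV U \<subseteq> {x. c x 0 = c z 0}"
      unfolding cantor_top_def openin_product_topology_alt by blast
    define F where "F = {i. U i \<noteq> UNIV}"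
    have fF: "finite F" using U(1) by (simp add: F_def)
    define r where "r = Max (insert 0 (nat ` abs ` F))"
    have rb: "\<bar>i\<bar> \<le> int r" if "i \<in> F" for i
    proof -
      have "nat \<bar>i\<bar> \<le> r" unfolding r_def using fF that by (intro Max_ge) auto
      then show ?thesis by linarith
    qed
    have "z \<in> B r" unfolding B_def
    proof (intro CollectI allI impI)
      fix w assume a: "agree r z w"
      have "w \<in> Pi\<^sub>E UNIV U"
      proof -
        have "w i \<in> U i" for i
        proof (cases "i \<in> F")
          case True then have "w i = z i" using a rb by (auto simp: agree_def)
          then show ?thesis using U(2) by (auto simp: PiE_UNIV_domain)
        next
          case False then show ?thesis by (auto simp: F_def)
        qed
        then show ?thesis by (auto simp: PiE_UNIV_domain)
      qed
      then show "c w 0 = c z 0" using U(3) by auto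
    qed
    then show ?thesis by blast
  qed
  have cpt: "compactin (cantor_top :: (int \<Rightarrow> 'a) topology) UNIV"
  proof -
    have "compact_space (cantor_top :: (int \<Rightarrow> 'a) topology)" by (rule compact_cantor)
    then have "compactin (cantor_top :: (int \<Rightarrow> 'a) topology) (topspace cantor_top)"
      by (simp only: compact_space_def)
    then show ?thesis by (simp only: topspace_cantor)
  qed
  have h1: "\<forall>X\<in>range B. openin cantor_top X" using opn by blast
  have h2: "UNIV \<subseteq> \<Union>(range B)" using cov by blast
  from cpt have cp2: "\<forall>U. (\<forall>X\<in>U. openin (cantor_top :: (int \<Rightarrow> 'a) topology) X) \<and> UNIV \<subseteq> \<Union>U \<longrightarrow> (\<exists>F. finite F \<and> F \<subseteq> U \<and> UNIV \<subseteq> \<Union>F)"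
    unfolding compactin_def by (rule conjunct2)
  have "\<exists>F. finite F \<and> F \<subseteq> range B \<and> UNIV \<subseteq> \<Union>F"
    using mp[OF spec[where x="range B", OF cp2] conjI[OF h1 h2]] .
  then obtain F where F: "finite F" "F \<subseteq> range B" "UNIV \<subseteq> \<Union>F" by blast
  obtain R where R: "finite R" "F = B ` R" using finite_subset_image[OF F(1) F(2)] by blast
  have mono: "B r \<subseteq> B r'" if "r \<le> r'" for r r'
  proof
    fix z assume z: "z \<in> B r"
    show "z \<in> B r'" unfolding B_def
    proof (intro CollectI allI impI)
      fix w assume "agree r' z w"
      then have "agree r z w" using that unfolding agree_def by (meson of_nat_le_iff order_trans)
      then show "c w 0 = c z 0" using z unfolding B_def by blast
    qed
  qed
  have "R \<noteq> {}"
  proof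
    assume "R = {}" then have "F = {}" using R by simp
    then show False using F(3) by simp
  qed
  have "UNIV \<subseteq> B (Max R)"
  proof
    fix z :: "int \<Rightarrow> 'a"
    have "z \<in> \<Union>F" using F(3) by blast
    then obtain r where "r \<in> R" "z \<in> B r" using R(2) by blast
    moreover have "r \<le> Max R" using R(1) \<open>r \<in> R\<close> by simp
    ultimately show "z \<in> B (Max R)" using mono by blast
  qed
  then have "\<forall>w. agree (Max R) z w \<longrightarrow> c w 0 = c z 0" for z unfolding B_def by blast
  then show ?thesis unfolding agree_def by metis
qed

lemma ca_local:
  assumes c: "(c :: (int \<Rightarrow> 'a::finite) \<Rightarrow> _) \<in> CA"
  shows "\<exists>r::nat. \<forall>z w i. (\<forall>j. i - int r \<le> j \<and> j \<le> i + int r \<longrightarrow> z j = w j) \<longrightarrow> c z i = c w i"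
proof -
  obtain r where r: "\<forall>z w. (\<forall>j. \<bar>j\<bar> \<le> int r \<longrightarrow> z j = w j) \<longrightarrow> c z 0 = c w 0"
    using ca_local0[OF c] by blast
  have "c z i = c w i" if "\<forall>j. i - int r \<le> j \<and> j \<le> i + int r \<longrightarrow> z j = w j" for z w i
  proof -
    have "\<forall>j. \<bar>j\<bar> \<le> int r \<longrightarrow> shn i z j = shn i w j"
    proof (intro allI impI)
      fix j :: int assume "\<bar>j\<bar> \<le> int r"
      then have "i - int r \<le> j+i \<and> j+i \<le> i + int r" by arith
      then show "shn i z j = shn i w j" using that by (simp add: shn_def)
    qed
    then have "c (shn i z) 0 = c (shn i w) 0" using r by blast
    then show ?thesis using ca_at[OF c] by metis
  qed
  then show ?thesis by blast
qed


definition per :: "int \<Rightarrow> int \<Rightarrow> (int \<Rightarrow> 'a) \<Rightarrow> (int \<Rightarrow> 'a)" where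
  "per a P z = (\<lambda>p. z (a + (p - a) mod P))"

lemma per_mod: "per a P z p = per a P z (p mod P)"
proof -
  have "(p - a) mod P = (p mod P - a) mod P" by (simp add: mod_diff_left_eq)
  then show ?thesis by (simp add: per_def)
qed

lemma per_in: "a \<le> p \<Longrightarrow> p < a + P \<Longrightarrow> per a P z p = z p"
  by (simp add: per_def)

lemma per_above: "a + P \<le> p \<Longrightarrow> p < a + 2 * P \<Longrightarrow> per a P z p = z (p - P)"
proof -
  assume h: "a + P \<le> p" "p < a + 2 * P"
  have "(p - a) mod P = ((p - a - P) + P) mod P" by simp
  also have "\<dots> = (p - a - P) mod P" by (rule mod_add_self2)
  also have "\<dots> = p - a - P" using h by (intro mod_pos_pos_trivial) auto
  finally have "(p - a) mod P = p - a - P" .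
  then show ?thesis by (simp add: per_def)
qed

lemma ca_periodic_at:
  assumes c: "c \<in> CA" and zp: "\<forall>p. z p = z (p mod P)"
  shows "c z i = c z (i mod P)"
proof -
  have "shn i z = shn (i mod P) z"
  proof
    fix j
    have "z (j + i) = z ((j + i) mod P)" using zp by blast
    also have "(j + i) mod P = (j + i mod P) mod P" by (simp add: mod_add_right_eq)
    also have "z \<dots> = z (j + i mod P)" using zp by metis
    finally show "shn i z j = shn (i mod P) z j" by (simp add: shn_def)
  qed
  then show ?thesis using ca_at[OF c] by metis
qed

lemma per_pair:
  assumes c: "c \<in> CA" and P: "P > 0"
    and h: "\<forall>i'. a + int r \<le> i' \<and> i' < a + P + int r \<longrightarrow> c (per a P x) i' = c (per a P y) i'"
  shows "c (per a P x) = c (per a P y)"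
proof
  fix i
  define i' where "i' = a + int r + (i - a - int r) mod P"
  have i'r: "a + int r \<le> i' \<and> i' < a + P + int r" using P by (simp add: i'_def)
  have "i mod P = i' mod P"
  proof -
    have "i' mod P = (a + int r + (i - a - int r)) mod P" unfolding i'_def by (simp add: mod_add_right_eq)
    then show ?thesis by simp
  qed
  have px: "\<forall>p. per a P x p = per a P x (p mod P)" using per_mod by metis
  have py: "\<forall>p. per a P y p = per a P y (p mod P)" using per_mod by metis
  have "c (per a P x) i = c (per a P x) (i mod P)" by (rule ca_periodic_at[OF c px])
  also have "\<dots> = c (per a P x) (i' mod P)" using \<open>i mod P = i' mod P\<close> by simp
  also have "\<dots> = c (per a P x) i'" by (rule ca_periodic_at[OF c px, symmetric])
  also have "\<dots> = c (per a P y) i'" using h i'r by blast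
  also have "\<dots> = c (per a P y) (i' mod P)" by (rule ca_periodic_at[OF c py])
  also have "\<dots> = c (per a P y) (i mod P)" using \<open>i mod P = i' mod P\<close> by simp
  also have "\<dots> = c (per a P y) i" by (rule ca_periodic_at[OF c py, symmetric])
  finally show "c (per a P x) i = c (per a P y) i" .
qed


lemma per_shift: "per a P z (p + P) = per a P z p"
proof -
  have "(p + P - a) mod P = ((p - a) + P) mod P" by (simp add: algebra_simps)
  also have "\<dots> = (p - a) mod P" by (rule mod_add_self2)
  finally show ?thesis by (simp add: per_def)
qed

lemma per_eq_on:
  assumes P: "P > 0" and hz: "\<forall>q. a \<le> q \<and> q < a + L \<longrightarrow> z q = z (q + P)"
  shows "a \<le> p \<Longrightarrow> p < a + P + L \<Longrightarrow> per a P z p = z p"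
proof (induction "nat (p - a)" arbitrary: p rule: less_induct)
  case less
  show ?case
  proof (cases "p < a + P")
    case True then show ?thesis using less.prems by (simp add: per_in)
  next
    case False
    define p' where "p' = p - P"
    have p'1: "a \<le> p'" "p' < a + L" using False less.prems by (auto simp: p'_def)
    have "nat (p' - a) < nat (p - a)" using P p'1 by (simp add: p'_def)
    then have ih: "per a P z p' = z p'" using less.hyps p'1 P by force
    have "z p = z p'" using hz p'1 by (simp add: p'_def)
    moreover have "per a P z p = per a P z p'" using per_shift[of a P z p'] by (simp add: p'_def)
    ultimately show ?thesis using ih by simp
  qed
qed

lemma noninj_periodic:
  assumes c: "c \<in> CA"
    and loc: "\<forall>z w i. (\<forall>j. i - int r \<le> j \<and> j \<le> i + int r \<longrightarrow> z j = w j) \<longrightarrow> c z i = c w i"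
    and xy: "x \<noteq> (y :: int \<Rightarrow> 'a::finite)" and cxy: "c x = c y"
  shows "\<exists>a P. P > 0 \<and> per a P x \<noteq> per a P y \<and> c (per a P x) = c (per a P y)"
proof -
  define L where "L = 2 * int r + 1"
  define D where "D = {j. x j \<noteq> y j}"
  show ?thesis
  proof (cases "finite D")
    case False
    define V where "V i = map (\<lambda>n. (x (i + int n), y (i + int n))) [0..<nat L]" for i
    have "V ` D \<subseteq> {xs. set xs \<subseteq> UNIV \<and> length xs = nat L}" by (auto simp: V_def)
    moreover have "finite {xs. set xs \<subseteq> (UNIV :: ('a \<times> 'a) set) \<and> length xs = nat L}"
      by (rule finite_lists_length_eq) simp
    ultimately have "finite (V ` D)" by (rule finite_subset)
    then have "\<not> inj_on V D" using False finite_imageD by blast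
    then obtain a1 a2 where a12: "a1 \<in> D" "a2 \<in> D" "a1 \<noteq> a2" "V a1 = V a2"
      unfolding inj_on_def by blast
    define a where "a = min a1 a2"
    define b where "b = max a1 a2"
    have ab: "a \<in> D" "a < b" "V a = V b" using a12 by (auto simp: a_def b_def min_def max_def)
    define P where "P = b - a"
    have P: "P > 0" using ab by (simp add: P_def)
    have Vab: "\<forall>n\<in>set [0..<nat L]. (x (a + int n), y (a + int n)) = (x (b + int n), y (b + int n))"
      using ab(3) unfolding V_def map_eq_conv by blast
    have hz: "\<forall>q. a \<le> q \<and> q < a + L \<longrightarrow> x q = x (q + P) \<and> y q = y (q + P)"
    proof (intro allI impI)
      fix q assume q: "a \<le> q \<and> q < a + L"
      define n where "n = nat (q - a)"
      have "n \<in> set [0..<nat L]" using q by (auto simp: n_def)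
      then have e: "(x (a + int n), y (a + int n)) = (x (b + int n), y (b + int n))" using Vab by blast
      have "a + int n = q" "b + int n = q + P" using q by (auto simp: n_def P_def)
      then show "x q = x (q + P) \<and> y q = y (q + P)" using e by simp
    qed
    have ex: "per a P x p = x p" and ey: "per a P y p = y p" if "a \<le> p" "p < a + P + L" for p
      using per_eq_on[OF P, of a L x p] per_eq_on[OF P, of a L y p] hz that by auto
    have "c (per a P x) = c (per a P y)"
    proof (rule per_pair[OF c P], intro allI impI)
      fix i' assume i': "a + int r \<le> i' \<and> i' < a + P + int r"
      have w: "\<forall>j. i' - int r \<le> j \<and> j \<le> i' + int r \<longrightarrow> a \<le> j \<and> j < a + P + L"
        using i' by (auto simp: L_def)
      have "c (per a P x) i' = c x i'" using loc ex w by blast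
      also have "\<dots> = c y i'" using cxy by simp
      also have "\<dots> = c (per a P y) i'" using loc ey w by (metis (no_types, lifting))
      finally show "c (per a P x) i' = c (per a P y) i'" .
    qed
    moreover have "per a P x \<noteq> per a P y"
    proof
      assume "per a P x = per a P y"
      then have "per a P x a = per a P y a" by simp
      then show False using ab(1) P by (simp add: per_in D_def)
    qed
    ultimately show ?thesis using P by blast
  next
    case True
    have "D \<noteq> {}" using xy by (auto simp: D_def)
    define s where "s = Min D"
    define t where "t = Max D"
    have st: "s \<in> D" "t \<in> D" using True \<open>D \<noteq> {}\<close> by (auto simp: s_def t_def)
    have outside: "x j = y j" if "j < s \<or> t < j" for j
    proof (rule ccontr)
      assume "x j \<noteq> y j" then have "j \<in> D" by (simp add: D_def)
      then have "s \<le> j" "j \<le> t" using True by (auto simp: s_def t_def)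
      then show False using that by auto
    qed
    have "s \<le> t" using st True by (simp add: s_def t_def)
    define a where "a = s - L"
    define P where "P = t + 1 + L - a"
    have P: "P > 0" and PL: "P > 2 * L" using \<open>s \<le> t\<close> by (auto simp: P_def a_def L_def)
    define b where "b = a + P"
    have "c (per a P x) = c (per a P y)"
    proof (rule per_pair[OF c P], intro allI impI)
      fix i' assume i': "a + int r \<le> i' \<and> i' < a + P + int r"
      show "c (per a P x) i' = c (per a P y) i'"
      proof (cases "i' + int r < b")
        case True
        have w: "\<forall>j. i' - int r \<le> j \<and> j \<le> i' + int r \<longrightarrow> a \<le> j \<and> j < a + P"
          using i' True by (auto simp: b_def)
        have "c (per a P x) i' = c x i'" using loc w per_in[of a _ P x] by (metis (no_types, lifting))
        also have "\<dots> = c y i'" using cxy by simp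
        also have "\<dots> = c (per a P y) i'" using loc w per_in[of a _ P y] by (metis (no_types, lifting))
        finally show ?thesis .
      next
        case False
        have "per a P x j = per a P y j" if j: "i' - int r \<le> j" "j \<le> i' + int r" for j
        proof (cases "j < b")
          case True
          have "t < j" using j False i' by (simp add: b_def P_def a_def L_def)
          moreover have "a \<le> j" using j i' by simp
          ultimately show ?thesis using True outside per_in[of a j P x] per_in[of a j P y]
            by (simp add: b_def)
        next
          case jb: False
          have j2: "j < a + 2 * P" using j i' PL by (simp add: L_def)
          have "j - P < s" using j i' by (simp add: L_def a_def)
          then have "x (j - P) = y (j - P)" using outside by blast
          then show ?thesis using per_above[of a P j x] per_above[of a P j y] jb j2
            by (simp add: b_def)
        qed
        then show ?thesis using loc by blast
      qed
    qed
    moreover have "per a P x \<noteq> per a P y"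
    proof
      assume "per a P x = per a P y"
      then have "per a P x s = per a P y s" by simp
      moreover have "a \<le> s" "s < a + P" using \<open>s \<le> t\<close> by (auto simp: a_def P_def L_def)
      ultimately show False using st(1) by (simp add: per_in D_def)
    qed
    ultimately show ?thesis using P by blast
  qed
qed


lemma topspace_pw: "topspace (pointwise_top :: ((int \<Rightarrow> 'a) \<Rightarrow> (int \<Rightarrow> 'a)) topology) = CA"
proof -
  have "\<Union>{U_pt x a |x a. True} = (CA :: ((int \<Rightarrow> 'a) \<Rightarrow> (int \<Rightarrow> 'a)) set)"
  proof
    show "\<Union>{U_pt x a |x a. True} \<subseteq> (CA :: ((int \<Rightarrow> 'a) \<Rightarrow> (int \<Rightarrow> 'a)) set)"
      by (auto simp: U_pt_def)
    show "(CA :: ((int \<Rightarrow> 'a) \<Rightarrow> (int \<Rightarrow> 'a)) set) \<subseteq> \<Union>{U_pt x a |x a. True}"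
    proof
      fix c :: "(int \<Rightarrow> 'a) \<Rightarrow> (int \<Rightarrow> 'a)" assume "c \<in> CA"
      then have "c \<in> U_pt (\<lambda>_. undefined) (c (\<lambda>_. undefined) 0)" by (simp add: U_pt_def)
      then show "c \<in> \<Union>{U_pt x a |x a. True}" by blast
    qed
  qed
  then show ?thesis unfolding pointwise_top_def by simp
qed

lemma open_U: "openin pointwise_top (U_pt x a)"
  unfolding pointwise_top_def openin_topology_generated_by_iff
  by (rule generate_topology_on.Basis) blast

theorem proposition3p2:
  assumes "CARD('a::finite) \<ge> 2"
  shows "closedin (pointwise_top :: ((int \<Rightarrow> 'a) \<Rightarrow> (int \<Rightarrow> 'a)) topology) REV"
  unfolding closedin_def topspace_pw
proof
  show "REV \<subseteq> CA" by (auto simp: REV_def)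
  show "openin pointwise_top (CA - (REV :: ((int \<Rightarrow> 'a) \<Rightarrow> (int \<Rightarrow> 'a)) set))"
  proof (subst openin_subopen, intro ballI)
    fix c :: "(int \<Rightarrow> 'a) \<Rightarrow> (int \<Rightarrow> 'a)"
    assume "c \<in> CA - REV"
    then have c: "c \<in> CA" and ni: "\<not> inj c" by (auto simp: REV_def)
    then obtain x y where xy: "x \<noteq> y" "c x = c y" unfolding inj_def by blast
    obtain r where loc: "\<forall>z w i. (\<forall>j. i - int r \<le> j \<and> j \<le> i + int r \<longrightarrow> z j = w j) \<longrightarrow> c z i = c w i"
      using ca_local[OF c] by blast
    obtain a P where aP: "P > 0" "per a P x \<noteq> per a P y" "c (per a P x) = c (per a P y)"
      using noninj_periodic[OF c loc xy] by blast
    define x' where "x' = per a P x"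
    define y' where "y' = per a P y"
    have px: "\<forall>p. x' p = x' (p mod P)" unfolding x'_def using per_mod by metis
    have py: "\<forall>p. y' p = y' (p mod P)" unfolding y'_def using per_mod by metis
    define N where "N = \<Inter> ((\<lambda>i. U_pt (shn i x') (c x' i) \<inter> U_pt (shn i y') (c y' i)) ` {0..<P})"
    have "openin pointwise_top N" unfolding N_def
    proof (rule openin_Inter)
      show "finite ((\<lambda>i. U_pt (shn i x') (c x' i) \<inter> U_pt (shn i y') (c y' i)) ` {0..<P})" by simp
      show "(\<lambda>i. U_pt (shn i x') (c x' i) \<inter> U_pt (shn i y') (c y' i)) ` {0..<P} \<noteq> {}" using aP(1) by simp
      fix X assume "X \<in> (\<lambda>i. U_pt (shn i x') (c x' i) \<inter> U_pt (shn i y') (c y' i)) ` {0..<P}"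
      then obtain i where "X = U_pt (shn i x') (c x' i) \<inter> U_pt (shn i y') (c y' i)" by blast
      then show "openin pointwise_top X" by (simp add: openin_Int open_U)
    qed
    moreover have "c \<in> N" unfolding N_def
    proof (rule InterI)
      fix X assume "X \<in> (\<lambda>i. U_pt (shn i x') (c x' i) \<inter> U_pt (shn i y') (c y' i)) ` {0..<P}"
      then obtain i where X: "X = U_pt (shn i x') (c x' i) \<inter> U_pt (shn i y') (c y' i)" by blast
      have "c (shn i x') 0 = c x' i" "c (shn i y') 0 = c y' i" using ca_at[OF c] by metis+
      then show "c \<in> X" using c by (simp add: X U_pt_def)
    qed
    moreover have "N \<subseteq> CA - REV"
    proof
      fix d assume dN: "d \<in> N"
      have "d \<in> U_pt (shn 0 x') (c x' 0)" using dN aP(1) unfolding N_def by auto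
      then have d: "d \<in> CA" by (simp add: U_pt_def)
      have "d x' = d y'"
      proof
        fix i
        have im: "i mod P \<in> {0..<P}" using aP(1) by simp
        have "d x' i = d x' (i mod P)" by (rule ca_periodic_at[OF d px])
        also have "\<dots> = d (shn (i mod P) x') 0" by (rule ca_at[OF d])
        also have "\<dots> = c x' (i mod P)"
        proof -
          have "d \<in> U_pt (shn (i mod P) x') (c x' (i mod P))" using dN im unfolding N_def by blast
          then show ?thesis by (simp add: U_pt_def)
        qed
        also have "\<dots> = c y' (i mod P)" using aP(3) by (simp add: x'_def y'_def)
        also have "\<dots> = d (shn (i mod P) y') 0"
        proof -
          have "d \<in> U_pt (shn (i mod P) y') (c y' (i mod P))" using dN im unfolding N_def by blast
          then show ?thesis by (simp add: U_pt_def)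
        qed
        also have "\<dots> = d y' (i mod P)" by (rule ca_at[OF d, symmetric])
        also have "\<dots> = d y' i" by (rule ca_periodic_at[OF d py, symmetric])
        finally show "d x' i = d y' i" .
      qed
      moreover have "x' \<noteq> y'" using aP(2) by (simp add: x'_def y'_def)
      ultimately have "\<not> inj d" unfolding inj_def by blast
      then show "d \<in> CA - REV" using d by (simp add: REV_def)
    qed
    ultimately show "\<exists>T. openin pointwise_top T \<and> c \<in> T \<and> T \<subseteq> CA - REV" by blast
  qed
qed

end
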